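(* Let $$f(\theta)=\ln2-\mathbb E\Big[\ln\big(1+e^{\theta|\mathsf T|}\big)\Big]+\frac{\theta}{2}\int_{\mathcal R_1}\Big|\ln\frac{q^+(y)}{q^-(y)}\Big|q^+(y)\,\mathrm dy+\frac{\theta}{2}\int_{\mathcal R_2}\Big|\ln\frac{q^+(y)}{q^-(y)}\Big|q^-(y)\,\mathrm dy,\qquad \theta<0.$$ Then $\sup_{\theta<0}f(\theta)=f(-1)=I(\mathsf X;\mathsf Y)$, where $$I(\mathsf X;\mathsf Y)=\ln2-\frac12\int\ln\Big(1+\frac{q^-(y)}{q^+(y)}\Big)q^+(y)\,\mathrm dy-\frac12\int\ln\Big(1+\frac{q^+(y)}{q^-(y)}\Big)q^-(y)\,\mathrm dy.$$
   Context: Let $q^+,q^-$ be positive probability densities on $\mathbb R$ such that the integrals below are finite. Let $\mathsf X$ be uniform on $\{+1,-1\}$ and let $\mathsf Y$ have density $q^{\mathsf X}$ given $\mathsf X$, so $\mathsf Y$ has marginal density $(q^++q^-)/2$. Let $\mathsf T=\ln(q^+(\mathsf Y)/q^-(\mathsf Y))$. Let $\mathcal R_1=\{y:q^+(y)<q^-(y)\}$ and $\mathcal R_2=\{y:q^+(y)>q^-(y)\}$. *)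

theory Defs
  imports "HOL-Analysis.Analysis"
begin

definition llr :: "(real \<Rightarrow> real) \<Rightarrow> (real \<Rightarrow> real) \<Rightarrow> real \<Rightarrow> real" where
  "llr qp qm y = ln (qp y / qm y)"

definition R1 :: "(real \<Rightarrow> real) \<Rightarrow> (real \<Rightarrow> real) \<Rightarrow> real set" where
  "R1 qp qm = {y. qp y < qm y}"

definition R2 :: "(real \<Rightarrow> real) \<Rightarrow> (real \<Rightarrow> real) \<Rightarrow> real set" where
  "R2 qp qm = {y. qp y > qm y}"

text \<open>The function f(theta); the expectation over Y is taken w.r.t. the marginal
  density (q+ + q-)/2.\<close>
definition fobj :: "(real \<Rightarrow> real) \<Rightarrow> (real \<Rightarrow> real) \<Rightarrow> real \<Rightarrow> real" where
  "fobj qp qm \<theta> =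
     ln 2
     - (LINT y|lborel. ln (1 + exp (\<theta> * \<bar>llr qp qm y\<bar>)) * ((qp y + qm y) / 2))
     + \<theta> / 2 * (LINT y:R1 qp qm|lborel. \<bar>llr qp qm y\<bar> * qp y)
     + \<theta> / 2 * (LINT y:R2 qp qm|lborel. \<bar>llr qp qm y\<bar> * qm y)"

definition mutinf :: "(real \<Rightarrow> real) \<Rightarrow> (real \<Rightarrow> real) \<Rightarrow> real" where
  "mutinf qp qm =
     ln 2
     - 1/2 * (LINT y|lborel. ln (1 + qm y / qp y) * qp y)
     - 1/2 * (LINT y|lborel. ln (1 + qp y / qm y) * qm y)"

end

theory Submission
  imports Defs
begin

lemma ln_lb: fixes z :: real assumes "z > 0" shows "ln z \<ge> 1 - 1/z"
proof -
  have "ln (1/z) \<le> 1/z - 1" using assms by (intro ln_le_minus_one) simp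
  then show ?thesis using assms by (simp add: ln_div)
qed

lemma gibbs:
  fixes x y u :: real assumes x: "x > 0" and y: "y > 0" and u: "u > 0"
  shows "(x+y) * ln (1+u) - y * ln u \<ge> (x+y) * ln (x+y) - x * ln x - y * ln y"
proof -
  have l1: "ln (x*(1+u)/(x+y)) \<ge> 1 - (x+y)/(x*(1+u))"
    using ln_lb[of "x*(1+u)/(x+y)"] x y u by simp
  have l2: "ln (y*(1+u)/((x+y)*u)) \<ge> 1 - (x+y)*u/(y*(1+u))"
    using ln_lb[of "y*(1+u)/((x+y)*u)"] x y u by simp
  have e1: "ln (x*(1+u)/(x+y)) = ln x + ln (1+u) - ln (x+y)"
    using x y u by (simp add: ln_div ln_mult)
  have e2: "ln (y*(1+u)/((x+y)*u)) = ln y + ln (1+u) - ln (x+y) - ln u"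
    using x y u by (simp add: ln_div ln_mult)
  have s: "x * (1 - (x+y)/(x*(1+u))) + y * (1 - (x+y)*u/(y*(1+u))) = 0"
  proof -
    have "1 + u > 0" using u by simp
    have a: "x * (1 - (x+y)/(x*(1+u))) = x - (x+y)/(1+u)" proof -
      have "x + u*x > 0" using x u by (simp add: add_pos_pos)
      then show ?thesis using x \<open>1+u>0\<close> by (simp add: field_simps)
    qed
    have b: "y * (1 - (x+y)*u/(y*(1+u))) = y - (x+y)*u/(1+u)" proof -
      have "y + u*y > 0" using y u by (simp add: add_pos_pos)
      then show ?thesis using y \<open>1+u>0\<close> by (simp add: field_simps)
    qed
    have c: "(x+y)/(1+u) + (x+y)*u/(1+u) = x + y"
    proof -
      have "(x+y)/(1+u) + (x+y)*u/(1+u) = ((x+y)*(1+u))/(1+u)" by (simp add: add_divide_distrib[symmetric] algebra_simps)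
      also have "\<dots> = x + y" using \<open>1+u>0\<close> by simp
      finally show ?thesis .
    qed
    show ?thesis using a b c by linarith
  qed
  have "x * ln (x*(1+u)/(x+y)) + y * ln (y*(1+u)/((x+y)*u)) \<ge> 0"
    using mult_left_mono[OF l1, of x] mult_left_mono[OF l2, of y] x y s by linarith
  then show ?thesis unfolding e1 e2 by (simp add: algebra_simps)
qed


lemma neghalf: fixes X Y :: real shows "Y \<le> X \<Longrightarrow> - X / 2 \<le> - Y / 2" by simp

lemma pw_le:
  fixes a b \<theta> :: real assumes a: "a > 0" and b: "b > 0"
  shows "- (ln (1 + exp (\<theta> * \<bar>ln (a/b)\<bar>)) * ((a + b) / 2))
         + \<theta> / 2 * ((if a < b then 1 else 0) * (\<bar>ln (a/b)\<bar> * a))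
         + \<theta> / 2 * ((if a > b then 1 else 0) * (\<bar>ln (a/b)\<bar> * b))
         \<le> - (1/2) * (ln (1 + b / a) * a) - (1/2) * (ln (1 + a / b) * b)"
proof -
  have e1: "ln (1 + b/a) = ln (a+b) - ln a" using a b by (simp add: field_simps ln_div)
  have e2: "ln (1 + a/b) = ln (a+b) - ln b" using a b by (simp add: field_simps ln_div)
  have K: "- (1/2) * (ln (1 + b / a) * a) - (1/2) * (ln (1 + a / b) * b) = (- (a+b) * ln (a+b) + a * ln a + b * ln b) / 2"
    unfolding e1 e2 by (simp add: algebra_simps)
  have "- (ln (1 + exp (\<theta> * \<bar>ln (a/b)\<bar>)) * ((a + b) / 2))
         + \<theta> / 2 * ((if a < b then 1 else 0) * (\<bar>ln (a/b)\<bar> * a))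
         + \<theta> / 2 * ((if a > b then 1 else 0) * (\<bar>ln (a/b)\<bar> * b))
         \<le> (- (a+b) * ln (a+b) + a * ln a + b * ln b) / 2" (is "?L \<le> ?K")
proof -
  define u where "u = exp (\<theta> * \<bar>ln (a/b)\<bar>)"
  have u: "u > 0" and lu: "ln u = \<theta> * \<bar>ln (a/b)\<bar>" unfolding u_def by simp_all
  have lab: "ln (a/b) = ln a - ln b" using a b by (simp add: ln_div)
  consider "a < b" | "a > b" | "a = b" by linarith
  then show ?thesis
  proof cases
    case 1
    have t: "\<bar>ln (a/b)\<bar> = ln b - ln a" using 1 a b lab by simp
    have g: "(b+a) * ln (1+u) - a * (\<theta> * (ln b - ln a)) \<ge> (b+a) * ln (b+a) - b * ln b - a * ln a"
      using gibbs[OF b a u] unfolding lu t .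
    have L: "?L = - ((b+a) * ln (1+u) - a * (\<theta> * (ln b - ln a))) / 2"
      using 1 unfolding t by (simp add: u_def t field_simps)
    have K2: "?K = - ((b+a) * ln (b+a) - b * ln b - a * ln a) / 2" by (simp add: algebra_simps)
    show "?L \<le> ?K" unfolding L K2 by (rule neghalf[OF g])
  next
    case 2
    have t: "\<bar>ln (a/b)\<bar> = ln a - ln b" using 2 a b lab by simp
    have g: "(a+b) * ln (1+u) - b * (\<theta> * (ln a - ln b)) \<ge> (a+b) * ln (a+b) - a * ln a - b * ln b"
      using gibbs[OF a b u] unfolding lu t .
    have L: "?L = - ((a+b) * ln (1+u) - b * (\<theta> * (ln a - ln b))) / 2"
      using 2 unfolding t by (simp add: u_def t field_simps)
    have K2: "?K = - ((a+b) * ln (a+b) - a * ln a - b * ln b) / 2" by (simp add: algebra_simps)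
    show "?L \<le> ?K" unfolding L K2 by (rule neghalf[OF g])
  next
    case 3
    have "ln (a + a) = ln 2 + ln a" using a ln_mult[of 2 a] by simp
    then show "?L \<le> ?K" using 3 by (simp add: algebra_simps)
  qed
qed
  then show ?thesis using K by linarith
qed

lemma pw_eq:
  fixes a b :: real assumes a: "a > 0" and b: "b > 0"
  shows "- (ln (1 + exp (-1 * \<bar>ln (a/b)\<bar>)) * ((a + b) / 2))
         + -1 / 2 * ((if a < b then 1 else 0) * (\<bar>ln (a/b)\<bar> * a))
         + -1 / 2 * ((if a > b then 1 else 0) * (\<bar>ln (a/b)\<bar> * b))
         = - (1/2) * (ln (1 + b / a) * a) - (1/2) * (ln (1 + a / b) * b)"
proof -
  have lab: "ln (a/b) = ln a - ln b" using a b by (simp add: ln_div)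
  have e1: "ln (1 + b/a) = ln (a+b) - ln a" using a b by (simp add: field_simps ln_div)
  have e2: "ln (1 + a/b) = ln (a+b) - ln b" using a b by (simp add: field_simps ln_div)
  consider "a < b" | "a > b" | "a = b" by linarith
  then show ?thesis
  proof cases
    case 1
    have t: "\<bar>ln (a/b)\<bar> = ln b - ln a" using 1 a b lab by simp
    have "exp (-1 * (ln b - ln a)) = a / b" using a b by (simp add: exp_diff)
    then show ?thesis using 1 unfolding t by (simp add: e1 e2 field_simps)
  next
    case 2
    have t: "\<bar>ln (a/b)\<bar> = ln a - ln b" using 2 a b lab by simp
    have "exp (-1 * (ln a - ln b)) = b / a" using a b by (simp add: exp_diff)
    then show ?thesis using 2 unfolding t by (simp add: e1 e2 field_simps)
  next
    case 3
    then show ?thesis using a by simp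
  qed
qed

theorem mainTheorem2:
  fixes qp qm :: "real \<Rightarrow> real"
  assumes meas_p: "qp \<in> borel_measurable borel"
    and meas_m: "qm \<in> borel_measurable borel"
    and pos_p: "\<And>y. qp y > 0"
    and pos_m: "\<And>y. qm y > 0"
    and int_p: "integrable lborel qp" and one_p: "(LINT y|lborel. qp y) = 1"
    and int_m: "integrable lborel qm" and one_m: "(LINT y|lborel. qm y) = 1"
    and fin1: "set_integrable lborel (R1 qp qm) (\<lambda>y. \<bar>llr qp qm y\<bar> * qp y)"
    and fin2: "set_integrable lborel (R2 qp qm) (\<lambda>y. \<bar>llr qp qm y\<bar> * qm y)"
    and fin3: "\<And>\<theta>. \<theta> < 0 \<Longrightarrow>
               integrable lborel (\<lambda>y. ln (1 + exp (\<theta> * \<bar>llr qp qm y\<bar>)) * ((qp y + qm y) / 2))"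
    and fin4: "integrable lborel (\<lambda>y. ln (1 + qm y / qp y) * qp y)"
    and fin5: "integrable lborel (\<lambda>y. ln (1 + qp y / qm y) * qm y)"
  shows "(SUP \<theta>\<in>{..<(0::real)}. fobj qp qm \<theta>) = fobj qp qm (-1)
         \<and> fobj qp qm (-1) = mutinf qp qm"
proof -
  let ?l = "\<lambda>y. \<bar>llr qp qm y\<bar>"
  define A where "A = (\<lambda>y. - (1/2) * (ln (1 + qm y / qp y) * qp y) - (1/2) * (ln (1 + qp y / qm y) * qm y))"
  define C where "C = (\<lambda>\<theta> y. ln (1 + exp (\<theta> * ?l y)) * ((qp y + qm y) / 2))"
  define D1 where "D1 = (\<lambda>y. indicator (R1 qp qm) y * (?l y * qp y))"
  define D2 where "D2 = (\<lambda>y. indicator (R2 qp qm) y * (?l y * qm y))"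
  define H where "H = (\<lambda>\<theta> y. - C \<theta> y + \<theta> / 2 * D1 y + \<theta> / 2 * D2 y)"
  have iD1: "integrable lborel D1" using fin1 unfolding set_integrable_def D1_def by simp
  have iD2: "integrable lborel D2" using fin2 unfolding set_integrable_def D2_def by simp
  have iC: "integrable lborel (C \<theta>)" if "\<theta> < 0" for \<theta> using fin3[OF that] unfolding C_def by simp
  have iH: "integrable lborel (H \<theta>)" if "\<theta> < 0" for \<theta>
    unfolding H_def using iC[OF that] iD1 iD2 by auto
  have fE: "fobj qp qm \<theta> = ln 2 + (LINT y|lborel. H \<theta> y)" if "\<theta> < 0" for \<theta>
  proof -
    have "(LINT y|lborel. H \<theta> y) = - (LINT y|lborel. C \<theta> y) + \<theta> / 2 * (LINT y|lborel. D1 y) + \<theta> / 2 * (LINT y|lborel. D2 y)"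
      unfolding H_def using iC[OF that] iD1 iD2 by (simp add: integral_add integral_minus)
    then show ?thesis unfolding fobj_def set_lebesgue_integral_def C_def D1_def D2_def by simp
  qed
  have mE: "mutinf qp qm = ln 2 + (LINT y|lborel. A y)"
  proof -
    have "(LINT y|lborel. A y) = - (1/2) * (LINT y|lborel. ln (1 + qm y / qp y) * qp y) - (1/2) * (LINT y|lborel. ln (1 + qp y / qm y) * qm y)"
      unfolding A_def using fin4 fin5 by (simp add: integral_diff)
    then show ?thesis unfolding mutinf_def by simp
  qed
  have ind1: "indicator (R1 qp qm) y = (if qp y < qm y then 1 else 0 :: real)" for y
    by (simp add: R1_def indicator_def)
  have ind2: "indicator (R2 qp qm) y = (if qp y > qm y then 1 else 0 :: real)" for y
    by (simp add: R2_def indicator_def)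
  have Hle: "H \<theta> y \<le> A y" for \<theta> y
    using pw_le[OF pos_p[of y] pos_m[of y], of \<theta>]
    unfolding H_def C_def D1_def D2_def A_def ind1 ind2 llr_def by simp
  have Heq: "H (-1) y = A y" for y
    using pw_eq[OF pos_p[of y] pos_m[of y]]
    unfolding H_def C_def D1_def D2_def A_def ind1 ind2 llr_def by simp
  have iA: "integrable lborel A" unfolding A_def using fin4 fin5 by auto
  have eq: "fobj qp qm (-1) = mutinf qp qm"
    proof -
    have "H (-1) = A" by (rule ext) (rule Heq)
    then show ?thesis unfolding fE[of "-1", simplified] mE by simp
  qed
  have le: "fobj qp qm \<theta> \<le> fobj qp qm (-1)" if "\<theta> < 0" for \<theta>
    unfolding eq fE[OF that] mE using integral_mono[OF iH[OF that] iA Hle] by simp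
  have "(SUP \<theta>\<in>{..<(0::real)}. fobj qp qm \<theta>) = fobj qp qm (-1)"
    by (rule cSup_eq_maximum) (use le in auto)
  then show ?thesis using eq by simp
qed

end
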